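(* Under the standing assumptions below, the group $(V,+)$ is characteristically simple, i.e. $V=S_1\oplus\dots\oplus S_n$ is a direct sum of pairwise isomorphic simple groups. In particular, if $V$ is abelian then $V\cong C_p^n$ is an elementary abelian $p$-group for some prime $p$, while if $V$ is non-abelian then $Z(V)=0$.
   Context: Skew left brace $(B,+,\circ)$: groups $(B,+)$, $(B,\circ)$ with $a\circ(b+c)=a\circ b-a+a\circ c$; $\lambda_a(b)=-a+a\circ b$, $\sigma_a(b)=-a+b+a$, $a*b=-a+a\circ b-b$. Ideal: normal subgroup $I$ of $(B,+)$, $\lambda_a(I)\subseteq I$ for all $a$, normal in $(B,\circ)$. $I*J$ = additive subgroup generated by $\{i*j\}$; $B^{(2)}=B*B$, $B^{(3)}=B^{(2)}*B$. Standing assumptions: $B$ is a finite skew left brace and $X\subseteq B$ with $|X|\ge3$ and $\lambda_a(X)=X$, $\sigma_a(X)=X$ for all $a\in B$; $B$ is additively generated by $X$; the ideal $V$ generated by $\{x-y:x,y\in X\}$ is the smallest non-zero ideal of $B$ (contained in every non-zero ideal); the quotient $B/V$ is a trivial skew left brace (its two operations coincide) with cyclic additive group; the group $\{\sigma_a\lambda_b|_X:a,b\in V\}$ acts transitively on $X$; and $B^{(3)}=0$. *)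

theory Defs
  imports "HOL-Algebra.Algebra"
begin

text \<open>A skew left brace is given by two HOL-Algebra groups A (the additive group (B,+),
written multiplicatively in HOL-Algebra notation) and M (the group (B,\<circ>)) on the
same carrier B.\<close>

definition skew_left_brace :: "'a monoid \<Rightarrow> 'a monoid \<Rightarrow> bool" where
  "skew_left_brace A M \<longleftrightarrow> group A \<and> group M \<and> carrier A = carrier M \<and>
     (\<forall>a\<in>carrier A. \<forall>b\<in>carrier A. \<forall>c\<in>carrier A.
        a \<otimes>\<^bsub>M\<^esub> (b \<otimes>\<^bsub>A\<^esub> c)
          = (a \<otimes>\<^bsub>M\<^esub> b) \<otimes>\<^bsub>A\<^esub> inv\<^bsub>A\<^esub> a \<otimes>\<^bsub>A\<^esub> (a \<otimes>\<^bsub>M\<^esub> c))"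

definition blam :: "'a monoid \<Rightarrow> 'a monoid \<Rightarrow> 'a \<Rightarrow> 'a \<Rightarrow> 'a" where
  "blam A M a b = inv\<^bsub>A\<^esub> a \<otimes>\<^bsub>A\<^esub> (a \<otimes>\<^bsub>M\<^esub> b)"

definition bsig :: "'a monoid \<Rightarrow> 'a \<Rightarrow> 'a \<Rightarrow> 'a" where
  "bsig A a b = inv\<^bsub>A\<^esub> a \<otimes>\<^bsub>A\<^esub> b \<otimes>\<^bsub>A\<^esub> a"

definition bstar :: "'a monoid \<Rightarrow> 'a monoid \<Rightarrow> 'a \<Rightarrow> 'a \<Rightarrow> 'a" where
  "bstar A M a b = inv\<^bsub>A\<^esub> a \<otimes>\<^bsub>A\<^esub> (a \<otimes>\<^bsub>M\<^esub> b) \<otimes>\<^bsub>A\<^esub> inv\<^bsub>A\<^esub> b"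

definition brace_ideal :: "'a monoid \<Rightarrow> 'a monoid \<Rightarrow> 'a set \<Rightarrow> bool" where
  "brace_ideal A M I \<longleftrightarrow> normal I A \<and> (\<forall>a\<in>carrier A. blam A M a ` I \<subseteq> I) \<and> normal I M"

definition brace_ideal_gen :: "'a monoid \<Rightarrow> 'a monoid \<Rightarrow> 'a set \<Rightarrow> 'a set" where
  "brace_ideal_gen A M S = \<Inter>{I. brace_ideal A M I \<and> S \<subseteq> I}"

definition brace_star_set :: "'a monoid \<Rightarrow> 'a monoid \<Rightarrow> 'a set \<Rightarrow> 'a set \<Rightarrow> 'a set" where
  "brace_star_set A M I J = generate A {bstar A M i j | i j. i \<in> I \<and> j \<in> J}"

definition brace_quotient_trivial :: "'a monoid \<Rightarrow> 'a monoid \<Rightarrow> 'a set \<Rightarrow> bool" where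
  "brace_quotient_trivial A M I \<longleftrightarrow> carrier (A Mod I) = carrier (M Mod I) \<and>
     (\<forall>x\<in>carrier (A Mod I). \<forall>y\<in>carrier (A Mod I).
        x \<otimes>\<^bsub>A Mod I\<^esub> y = x \<otimes>\<^bsub>M Mod I\<^esub> y)"

definition cyclic_group :: "('a, 'b) monoid_scheme \<Rightarrow> bool" where
  "cyclic_group G \<longleftrightarrow> (\<exists>g\<in>carrier G. generate G {g} = carrier G)"

definition group_center :: "('a, 'b) monoid_scheme \<Rightarrow> 'a set" where
  "group_center G = {z \<in> carrier G. \<forall>g\<in>carrier G. z \<otimes>\<^bsub>G\<^esub> g = g \<otimes>\<^bsub>G\<^esub> z}"

definition char_simple :: "('a, 'b) monoid_scheme \<Rightarrow> bool" where
  "char_simple G \<longleftrightarrow> carrier G \<noteq> {\<one>\<^bsub>G\<^esub>} \<and>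
     (\<forall>H. subgroup H G \<and> (\<forall>\<phi>\<in>iso G G. \<phi> ` H = H) \<longrightarrow> H = {\<one>\<^bsub>G\<^esub>} \<or> H = carrier G)"

end

theory Submission
  imports Defs
begin


fun psi :: "('a,'b) monoid_scheme \<Rightarrow> (nat \<Rightarrow> 'a) \<Rightarrow> nat \<Rightarrow> (nat \<Rightarrow> int) \<Rightarrow> 'a" where
  "psi G g 0 c = \<one>\<^bsub>G\<^esub>"
| "psi G g (Suc k) c = psi G g k c \<otimes>\<^bsub>G\<^esub> (g k [^]\<^bsub>G\<^esub> nat (c k))"

context comm_group begin

lemma psi_closed: "(\<And>i. i < k \<Longrightarrow> g i \<in> carrier G) \<Longrightarrow> psi G g k c \<in> carrier G"
  by (induction k) auto

lemma psi_cong: "(\<And>i. i < k \<Longrightarrow> c i = d i) \<Longrightarrow> psi G g k c = psi G g k d"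
  by (induction k) auto

lemma psi_cong_g: "(\<And>i. i < k \<Longrightarrow> g i = g' i) \<Longrightarrow> psi G g k c = psi G g' k c"
  by (induction k) auto

lemma pow_modp:
  assumes x: "x \<in> carrier G" and xp: "x [^] p = \<one>"
  shows "x [^] (n::nat) = x [^] (n mod p)"
proof -
  have "x [^] n = x [^] (p * (n div p) + n mod p)" by simp
  also have "\<dots> = (x [^] p) [^] (n div p) \<otimes> x [^] (n mod p)"
    using x by (simp add: nat_pow_mult nat_pow_pow)
  also have "\<dots> = x [^] (n mod p)" using x xp by simp
  finally show ?thesis .
qed

lemma pow_add_modp:
  assumes x: "x \<in> carrier G" and xp: "x [^] p = \<one>" and "0 \<le> a" "0 \<le> b"
  shows "x [^] nat ((a + b) mod int p) = x [^] nat a \<otimes> x [^] nat b"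
proof -
  have "nat ((a + b) mod int p) = (nat a + nat b) mod p"
    using assms(3,4) by (simp add: nat_mod_distrib nat_add_distrib)
  then show ?thesis using pow_modp[OF x xp, of "nat a + nat b"] x
    by (simp add: nat_pow_mult)
qed

lemma psi_hom:
  assumes expo: "\<And>x. x \<in> carrier G \<Longrightarrow> x [^] p = \<one>"
    and g: "\<And>i. i < k \<Longrightarrow> g i \<in> carrier G"
    and cd: "\<And>i. i < k \<Longrightarrow> 0 \<le> c i \<and> 0 \<le> d i"
  shows "psi G g k (\<lambda>i. (c i + d i) mod int p) = psi G g k c \<otimes> psi G g k d"
  using g cd
proof (induction k)
  case 0
  then show ?case by simp
next
  case (Suc k)
  have gk: "g k \<in> carrier G" using Suc.prems by simp
  have IH: "psi G g k (\<lambda>i. (c i + d i) mod int p) = psi G g k c \<otimes> psi G g k d"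
    using Suc by simp
  have P: "psi G g k c \<in> carrier G" "psi G g k d \<in> carrier G"
    using Suc.prems by (auto intro: psi_closed)
  have "g k [^] nat ((c k + d k) mod int p) = g k [^] nat (c k) \<otimes> g k [^] nat (d k)"
    using pow_add_modp[OF gk expo[OF gk]] Suc.prems by simp
  then show ?case using IH P gk by (simp add: m_ac)
qed


lemma subgroup_pow_closed: "subgroup S G \<Longrightarrow> y \<in> S \<Longrightarrow> y [^] (n::nat) \<in> S"
  by (induction n) (auto simp: subgroup.one_closed subgroup.m_closed)

lemma psi_hom_Cp:
  assumes p: "p > 0" and expo: "\<And>x. x \<in> carrier G \<Longrightarrow> x [^] p = \<one>"
    and g: "\<And>i. i < k \<Longrightarrow> g i \<in> carrier G"
  shows "psi G g k \<in> hom (product_group {..<k} (\<lambda>_. integer_mod_group p)) G"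
proof (rule homI)
  fix x assume "x \<in> carrier (product_group {..<k} (\<lambda>_. integer_mod_group p))"
  show "psi G g k x \<in> carrier G" using g by (rule psi_closed)
next
  fix x y assume x: "x \<in> carrier (product_group {..<k} (\<lambda>_. integer_mod_group p))"
    and y: "y \<in> carrier (product_group {..<k} (\<lambda>_. integer_mod_group p))"
  have "psi G g k (x \<otimes>\<^bsub>product_group {..<k} (\<lambda>_. integer_mod_group p)\<^esub> y)
      = psi G g k (\<lambda>i. (x i + y i) mod int p)"
    by (rule psi_cong) simp
  also have "\<dots> = psi G g k x \<otimes> psi G g k y"
    using x y p by (intro psi_hom[OF expo g]) (auto simp: carrier_integer_mod_group PiE_iff)
  finally show "psi G g k (x \<otimes>\<^bsub>product_group {..<k} (\<lambda>_. integer_mod_group p)\<^esub> y) = psi G g k x \<otimes> psi G g k y" .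
qed

lemma extend_inj:
  assumes p: "Factorial_Ring.prime p" and expo: "\<And>x. x \<in> carrier G \<Longrightarrow> x [^] p = \<one>"
    and g: "\<And>i. i < k \<Longrightarrow> g i \<in> carrier G"
    and inj: "inj_on (psi G g k) (carrier (product_group {..<k} (\<lambda>_. integer_mod_group p)))"
    and x: "x \<in> carrier G"
    and xS: "x \<notin> psi G g k ` carrier (product_group {..<k} (\<lambda>_. integer_mod_group p))"
  shows "inj_on (psi G (g(k:=x)) (Suc k)) (carrier (product_group {..<Suc k} (\<lambda>_. integer_mod_group p)))"
proof (rule inj_onI)
  let ?C = "product_group {..<k} (\<lambda>_. integer_mod_group p)"
  let ?S = "psi G g k ` carrier ?C"
  have p0: "p > 0" using p prime_gt_0_nat by blast
  have hom: "psi G g k \<in> hom ?C G" apply (rule psi_hom_Cp[OF p0]) using expo g by auto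
  interpret gh: group_hom ?C G "psi G g k"
    using hom by (simp add: group_hom_def group_hom_axioms_def comm_group_def product_group is_group)
  have S: "subgroup ?S G" by (rule gh.img_is_subgroup)
  fix c d
  assume c: "c \<in> carrier (product_group {..<Suc k} (\<lambda>_. integer_mod_group p))"
    and d: "d \<in> carrier (product_group {..<Suc k} (\<lambda>_. integer_mod_group p))"
    and eq: "psi G (g(k:=x)) (Suc k) c = psi G (g(k:=x)) (Suc k) d"
  have c': "restrict c {..<k} \<in> carrier ?C" and d': "restrict d {..<k} \<in> carrier ?C"
    using c d p0 by (auto simp: carrier_integer_mod_group PiE_iff)
  have pc: "psi G (g(k:=x)) k c = psi G g k (restrict c {..<k})"
  proof -
    have "psi G (g(k:=x)) k c = psi G g k c" by (rule psi_cong_g) simp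
    also have "\<dots> = psi G g k (restrict c {..<k})" by (rule psi_cong) simp
    finally show ?thesis .
  qed
  have pd: "psi G (g(k:=x)) k d = psi G g k (restrict d {..<k})"
  proof -
    have "psi G (g(k:=x)) k d = psi G g k d" by (rule psi_cong_g) simp
    also have "\<dots> = psi G g k (restrict d {..<k})" by (rule psi_cong) simp
    finally show ?thesis .
  qed
  define a where "a = nat (c k)"
  define b where "b = nat (d k)"
  have ck: "0 \<le> c k \<and> c k < int p" "0 \<le> d k \<and> d k < int p"
    using c d p0 by (auto simp: carrier_integer_mod_group PiE_iff)
  have ab: "a < p" "b < p" using ck by (auto simp: a_def b_def nat_less_iff)
  have PC: "psi G g k (restrict c {..<k}) \<in> ?S" "psi G g k (restrict d {..<k}) \<in> ?S"
    using c' d' by auto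
  have PCc: "psi G g k (restrict c {..<k}) \<in> carrier G" "psi G g k (restrict d {..<k}) \<in> carrier G"
    using PC S subgroup.subset by blast+
  have eq2: "psi G g k (restrict c {..<k}) \<otimes> x [^] a = psi G g k (restrict d {..<k}) \<otimes> x [^] b"
    using eq pc pd by (simp add: a_def b_def)
  have "a = b"
  proof (rule ccontr)
    assume ne: "a \<noteq> b"
    define e where "e = (a + (p - b)) mod p"
    have e0: "e \<noteq> 0" "e < p"
    proof -
      show "e < p" using p0 by (simp add: e_def)
      show "e \<noteq> 0"
      proof
        assume "e = 0"
        then have "p dvd a + (p - b)" by (simp add: e_def mod_eq_0_iff_dvd)
        then obtain q where q: "a + (p - b) = p * q" by (auto elim: dvdE)
        have "a + (p - b) < p * 2" using ab by arith
        then have "p * q < p * 2" using q by simp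
        then have "q < 2" by (meson mult_less_cancel1)
        moreover have "q \<noteq> 0"
        proof
          assume "q = 0" then have "a + (p - b) = 0" using q by simp
          then show False using ab by arith
        qed
        ultimately have "q = 1" by simp
        then have "a + (p - b) = p" using q by simp
        then show False using ab ne by arith
      qed
    qed
    have "psi G g k (restrict c {..<k}) \<otimes> x [^] (a + (p - b)) = (psi G g k (restrict c {..<k}) \<otimes> x [^] a) \<otimes> x [^] (p - b)"
      using x PCc by (simp add: m_assoc nat_pow_mult)
    also have "\<dots> = psi G g k (restrict d {..<k}) \<otimes> x [^] b \<otimes> x [^] (p - b)"
      using eq2 by simp
    also have "\<dots> = psi G g k (restrict d {..<k})"
      using x PCc ab by (simp add: m_assoc nat_pow_mult expo[OF x])
    finally have "x [^] (a + (p - b)) = inv (psi G g k (restrict c {..<k})) \<otimes> psi G g k (restrict d {..<k})"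
      using x PCc by (metis inv_solve_left' nat_pow_closed)
    also have "\<dots> \<in> ?S" using PC S by (simp add: subgroup.m_closed subgroup.m_inv_closed)
    finally have xe: "x [^] e \<in> ?S" using pow_modp[OF x expo[OF x]] e_def by simp
    have "\<not> p dvd e" using e0 by (auto dest: dvd_imp_le)
    then have "coprime e p" using p prime_imp_coprime coprime_commute by blast
    then have "gcd e p = 1" by simp
    then obtain f y where fy: "e * f = p * y + 1" using bezout_nat[of e p] e0 by auto
    have "x = (x [^] p) [^] y \<otimes> x" using x expo by simp
    also have "\<dots> = x [^] (e * f)" using x by (simp add: fy nat_pow_pow nat_pow_mult)
    also have "\<dots> = (x [^] e) [^] f" using x by (simp add: nat_pow_pow)
    also have "\<dots> \<in> ?S" using subgroup_pow_closed[OF S xe] .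
    finally show False using xS by simp
  qed
  then have "psi G g k (restrict c {..<k}) = psi G g k (restrict d {..<k})"
    using eq2 x PCc by simp
  then have r: "restrict c {..<k} = restrict d {..<k}" using inj c' d' inj_onD by metis
  have "c k = d k" using \<open>a = b\<close> ck unfolding a_def b_def by (metis nat_eq_iff2)
  show "c = d"
  proof (rule PiE_ext[OF c[simplified] d[simplified]])
    fix i assume i: "i \<in> {..<Suc k}"
    show "c i = d i"
    proof (cases "i < k")
      case True then show ?thesis using fun_cong[OF r, of i] by simp
    next
      case False
      then have "i = k" using i by simp
      then show ?thesis using \<open>c k = d k\<close> by simp
    qed
  qed
qed


lemma card_Cp: "p > 0 \<Longrightarrow> card (carrier (product_group {..<k} (\<lambda>_. integer_mod_group p))) = p ^ k"
  by (simp add: card_PiE carrier_integer_mod_group)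

lemma elem_abelian_iso:
  assumes fin: "finite (carrier G)" and p: "Factorial_Ring.prime p"
    and expo: "\<And>x. x \<in> carrier G \<Longrightarrow> x [^] p = \<one>"
  shows "\<exists>n::nat. G \<cong> product_group {..<n} (\<lambda>_. integer_mod_group p)"
proof -
  let ?C = "\<lambda>k. product_group {..<k} (\<lambda>_. integer_mod_group p)"
  define good where "good g k \<longleftrightarrow> (\<forall>i<k. g i \<in> carrier G) \<and> inj_on (psi G g k) (carrier (?C k))" for g k
  define K where "K = {k. \<exists>g. good g k}"
  have p0: "p > 0" using p prime_gt_0_nat by blast
  have p2: "p \<ge> 2" using p prime_ge_2_nat by blast
  have "0 \<in> K" unfolding K_def good_def by (auto simp: inj_on_def)
  have bound: "k < card (carrier G)" if kK: "k \<in> K" for k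
  proof -
    obtain g where g: "good g k" using kK unfolding K_def by auto
    have "psi G g k ` carrier (?C k) \<subseteq> carrier G"
      using g unfolding good_def by (auto intro: psi_closed)
    then have "card (carrier (?C k)) \<le> card (carrier G)"
      using g fin unfolding good_def by (metis card_inj_on_le)
    then have "p ^ k \<le> card (carrier G)" using card_Cp[OF p0] by simp
    moreover have "k < 2 ^ k" by (rule less_exp)
    moreover have "(2::nat) ^ k \<le> p ^ k" using p2 by (simp add: power_mono)
    ultimately show ?thesis by linarith
  qed
  then have finK: "finite K" by (meson finite_nat_set_iff_bounded)
  define n where "n = Max K"
  have nK: "n \<in> K" unfolding n_def using finK \<open>0 \<in> K\<close> by (intro Max_in) auto
  then obtain g where g: "good g n" unfolding K_def by auto
  have gc: "\<And>i. i < n \<Longrightarrow> g i \<in> carrier G" using g good_def by auto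
  have hom: "psi G g n \<in> hom (?C n) G" apply (rule psi_hom_Cp[OF p0]) using expo gc by auto
  have img: "psi G g n ` carrier (?C n) = carrier G"
  proof (rule ccontr)
    assume "psi G g n ` carrier (?C n) \<noteq> carrier G"
    moreover have "psi G g n ` carrier (?C n) \<subseteq> carrier G" using hom by (auto simp: hom_def)
    ultimately obtain x where x: "x \<in> carrier G" "x \<notin> psi G g n ` carrier (?C n)" by blast
    have "inj_on (psi G (g(n:=x)) (Suc n)) (carrier (?C (Suc n)))"
      apply (rule extend_inj[OF p])
      using expo gc g x unfolding good_def by auto
    then have "good (g(n:=x)) (Suc n)" unfolding good_def using gc x by (auto simp: less_Suc_eq)
    then have "Suc n \<in> K" unfolding K_def by auto
    then have "Suc n \<le> n" using finK n_def by simp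
    then show False by simp
  qed
  have "psi G g n \<in> iso (?C n) G"
    using hom img g unfolding good_def by (auto simp: iso_def bij_betw_def)
  then have "?C n \<cong> G" by (auto simp: is_iso_def)
  moreover have "group (?C n)" by simp
  ultimately have "G \<cong> ?C n" by (rule group.iso_sym[rotated])
  then show ?thesis by (rule exI)
qed


lemma cs_abelian:
  assumes fin: "finite (carrier G)" and cs: "char_simple G"
  shows "\<exists>p (n::nat). Factorial_Ring.prime (p::nat) \<and> G \<cong> product_group {..<n} (\<lambda>_. integer_mod_group p)"
proof -
  obtain g where g: "g \<in> carrier G" "g \<noteq> \<one>"
    using cs unfolding char_simple_def by blast
  have ord0: "order G > 0" using fin g by (auto simp: order_def card_gt_0_iff)
  have gord: "g [^] order G = \<one>" using pow_order_eq_1[OF g(1)] .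
  define m where "m = (LEAST m::nat. 0 < m \<and> g [^] m = \<one>)"
  have m: "0 < m \<and> g [^] m = \<one>" unfolding m_def
    by (rule LeastI[of _ "order G"]) (use ord0 gord in auto)
  have mmin: "\<And>k. 0 < k \<Longrightarrow> k < m \<Longrightarrow> g [^] k \<noteq> \<one>"
    unfolding m_def using not_less_Least by blast
  have "m \<noteq> 1" using m g by auto
  then obtain p where p: "Factorial_Ring.prime p" "p dvd m" using prime_factor_nat by blast
  have p2: "p \<ge> 2" using p prime_ge_2_nat by blast
  define h where "h = g [^] (m div p)"
  have hc: "h \<in> carrier G" using g h_def by simp
  have hp: "h [^] p = \<one>" using g m p by (simp add: h_def nat_pow_pow)
  have "m div p < m" using m p2 by simp
  moreover have "0 < m div p" using m p by (metis dvd_div_eq_0_iff neq0_conv)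
  ultimately have h1: "h \<noteq> \<one>" using mmin h_def by simp
  define K where "K = {x \<in> carrier G. x [^] p = \<one>}"
  have subK: "subgroup K G"
  proof
    show "K \<subseteq> carrier G" by (auto simp: K_def)
    show "\<one> \<in> K" by (auto simp: K_def)
    fix x y assume x: "x \<in> K" and y: "y \<in> K"
    then show "x \<otimes> y \<in> K" by (auto simp: K_def nat_pow_distrib)
    show "inv x \<in> K" using x by (auto simp: K_def nat_pow_inv)
  qed
  have charK: "\<phi> ` K = K" if phi: "\<phi> \<in> iso G G" for \<phi>
  proof -
    have hom: "\<phi> \<in> hom G G" and im: "\<phi> ` carrier G = carrier G" and inj: "inj_on \<phi> (carrier G)"
      using phi by (auto simp: iso_iff)
    have pw: "\<phi> (x [^] p) = \<phi> x [^] p" if "x \<in> carrier G" for x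
      using hom_nat_pow[OF hom that is_group is_group] .
    have one: "\<phi> \<one> = \<one>" using hom_one[OF hom is_group is_group] .
    show ?thesis
    proof
      show "\<phi> ` K \<subseteq> K"
      proof
        fix w assume "w \<in> \<phi> ` K"
        then obtain x where x: "x \<in> carrier G" "x [^] p = \<one>" "w = \<phi> x" by (auto simp: K_def)
        have "\<phi> x \<in> carrier G" using im x by blast
        moreover have "\<phi> x [^] p = \<one>" using pw[OF x(1)] x(2) one by simp
        ultimately show "w \<in> K" using x by (simp add: K_def)
      qed
      show "K \<subseteq> \<phi> ` K"
      proof
        fix x assume x: "x \<in> K"
        then obtain y where y: "y \<in> carrier G" "x = \<phi> y" using im by (auto simp: K_def)
        have "\<phi> (y [^] p) = \<phi> \<one>" using x y pw one by (auto simp: K_def)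
        then have "y [^] p = \<one>" using inj y by (auto dest: inj_onD)
        then show "x \<in> \<phi> ` K" using y by (auto simp: K_def)
      qed
    qed
  qed
  have "h \<in> K" using hc hp by (simp add: K_def)
  then have "K \<noteq> {\<one>}" using h1 by auto
  then have "K = carrier G" using cs subK charK unfolding char_simple_def by blast
  then have "\<And>x. x \<in> carrier G \<Longrightarrow> x [^] p = \<one>" by (auto simp: K_def)
  then show ?thesis using elem_abelian_iso[OF fin p(1)] p(1) by blast
qed

end

lemma (in group) cs_center:
  assumes cs: "char_simple G" and nc: "\<not> comm_group G"
  shows "group_center G = {\<one>}"
proof -
  let ?Z = "group_center G"
  have subZ: "subgroup ?Z G"
  proof
    show "?Z \<subseteq> carrier G" by (auto simp: group_center_def)
    show "\<one> \<in> ?Z" by (auto simp: group_center_def)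
    fix x y assume x: "x \<in> ?Z" and y: "y \<in> ?Z"
    show "x \<otimes> y \<in> ?Z"
    proof -
      have xc: "x \<in> carrier G" and yc: "y \<in> carrier G" using x y by (auto simp: group_center_def)
      have "x \<otimes> y \<otimes> g = g \<otimes> (x \<otimes> y)" if g: "g \<in> carrier G" for g
      proof -
        have "x \<otimes> y \<otimes> g = x \<otimes> (y \<otimes> g)" using xc yc g by (simp add: m_assoc)
        also have "\<dots> = x \<otimes> (g \<otimes> y)" using y g by (simp add: group_center_def)
        also have "\<dots> = (x \<otimes> g) \<otimes> y" using xc yc g by (simp add: m_assoc)
        also have "\<dots> = (g \<otimes> x) \<otimes> y" using x g by (simp add: group_center_def)
        also have "\<dots> = g \<otimes> (x \<otimes> y)" using xc yc g by (simp add: m_assoc)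
        finally show ?thesis .
      qed
      then show ?thesis using xc yc by (simp add: group_center_def)
    qed
    show "inv x \<in> ?Z"
    proof -
      have xc: "x \<in> carrier G" using x by (auto simp: group_center_def)
      have "inv x \<otimes> g = g \<otimes> inv x" if g: "g \<in> carrier G" for g
      proof -
        have "x \<otimes> g = g \<otimes> x" using x g by (auto simp: group_center_def)
        have "inv x \<otimes> g = inv x \<otimes> (g \<otimes> x) \<otimes> inv x" using xc g by (simp add: m_assoc)
        also have "\<dots> = inv x \<otimes> (x \<otimes> g) \<otimes> inv x" using \<open>x \<otimes> g = g \<otimes> x\<close> by simp
        also have "\<dots> = g \<otimes> inv x" using xc g by (simp add: m_assoc[symmetric])
        finally show ?thesis .
      qed
      then show ?thesis using xc by (auto simp: group_center_def)
    qed
  qed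
  have charZ: "\<phi> ` ?Z = ?Z" if phi: "\<phi> \<in> iso G G" for \<phi>
  proof -
    have hom: "\<phi> \<in> hom G G" and im: "\<phi> ` carrier G = carrier G" and inj: "inj_on \<phi> (carrier G)"
      using phi by (auto simp: iso_iff)
    have mul: "\<And>x y. x \<in> carrier G \<Longrightarrow> y \<in> carrier G \<Longrightarrow> \<phi> (x \<otimes> y) = \<phi> x \<otimes> \<phi> y"
      using hom by (auto simp: hom_def)
    show ?thesis
    proof
      show "\<phi> ` ?Z \<subseteq> ?Z"
      proof
        fix w assume "w \<in> \<phi> ` ?Z"
        then obtain z where z: "z \<in> ?Z" "w = \<phi> z" by auto
        have zc: "z \<in> carrier G" using z by (auto simp: group_center_def)
        have "\<phi> z \<otimes> g = g \<otimes> \<phi> z" if g: "g \<in> carrier G" for g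
        proof -
          obtain h where h: "h \<in> carrier G" "g = \<phi> h" using g im by blast
          have "z \<otimes> h = h \<otimes> z" using z h by (auto simp: group_center_def)
                then have "\<phi> (z \<otimes> h) = \<phi> (h \<otimes> z)" by simp
          then show ?thesis using mul h zc by simp
        qed
        then show "w \<in> ?Z" using z zc im by (auto simp: group_center_def)
      qed
      show "?Z \<subseteq> \<phi> ` ?Z"
      proof
        fix z assume z: "z \<in> ?Z"
        then obtain y where y: "y \<in> carrier G" "z = \<phi> y" using im by (auto simp: group_center_def)
        have "y \<otimes> h = h \<otimes> y" if h: "h \<in> carrier G" for h
        proof -
          have "\<phi> (y \<otimes> h) = \<phi> (h \<otimes> y)"
            using mul y h z im by (auto simp: group_center_def)
          then show ?thesis using inj y h by (auto dest: inj_onD)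
        qed
        then show "z \<in> \<phi> ` ?Z" using y by (auto simp: group_center_def)
      qed
    qed
  qed
  have "?Z = {\<one>} \<or> ?Z = carrier G" using cs subZ charZ unfolding char_simple_def by blast
  moreover have "?Z \<noteq> carrier G"
  proof
    assume "?Z = carrier G"
    then have "\<And>x y. x \<in> carrier G \<Longrightarrow> y \<in> carrier G \<Longrightarrow> x \<otimes> y = y \<otimes> x"
      unfolding group_center_def by blast
    then have "comm_group G"
      by (rule group_comm_groupI)
    then show False using nc by simp
  qed
  ultimately show ?thesis by blast
qed



locale sbrace =
  fixes A M :: "'a monoid"
  assumes sb: "skew_left_brace A M"
begin

lemma grpA: "group A" and grpM: "group M" and carrM: "carrier M = carrier A"
  using sb by (auto simp: skew_left_brace_def)

sublocale A: group A by (rule grpA)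
sublocale M: group M by (rule grpM)

lemma law: "a \<in> carrier A \<Longrightarrow> b \<in> carrier A \<Longrightarrow> c \<in> carrier A \<Longrightarrow>
  a \<otimes>\<^bsub>M\<^esub> (b \<otimes>\<^bsub>A\<^esub> c) = (a \<otimes>\<^bsub>M\<^esub> b) \<otimes>\<^bsub>A\<^esub> inv\<^bsub>A\<^esub> a \<otimes>\<^bsub>A\<^esub> (a \<otimes>\<^bsub>M\<^esub> c)"
  using sb by (auto simp: skew_left_brace_def)

lemma circ_closed [simp]: "a \<in> carrier A \<Longrightarrow> b \<in> carrier A \<Longrightarrow> a \<otimes>\<^bsub>M\<^esub> b \<in> carrier A"
  using M.m_closed carrM by auto

lemma circ_one: assumes a: "a \<in> carrier A" shows "a \<otimes>\<^bsub>M\<^esub> \<one>\<^bsub>A\<^esub> = a"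
proof -
  define u where "u = a \<otimes>\<^bsub>M\<^esub> \<one>\<^bsub>A\<^esub>"
  have u: "u \<in> carrier A" using a by (simp add: u_def)
  have eq: "u \<otimes>\<^bsub>A\<^esub> inv\<^bsub>A\<^esub> a \<otimes>\<^bsub>A\<^esub> u = u"
    using law[OF a A.one_closed A.one_closed] by (simp add: u_def)
  have "u \<otimes>\<^bsub>A\<^esub> (inv\<^bsub>A\<^esub> a \<otimes>\<^bsub>A\<^esub> u) = u \<otimes>\<^bsub>A\<^esub> \<one>\<^bsub>A\<^esub>"
    using u a by (simp add: A.m_assoc[symmetric] eq)
  then have "\<one>\<^bsub>A\<^esub> = inv\<^bsub>A\<^esub> a \<otimes>\<^bsub>A\<^esub> u" using u a by (subst (asm) A.l_cancel) auto
  then have "a \<otimes>\<^bsub>A\<^esub> \<one>\<^bsub>A\<^esub> = a \<otimes>\<^bsub>A\<^esub> (inv\<^bsub>A\<^esub> a \<otimes>\<^bsub>A\<^esub> u)" by simp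
  then show ?thesis using u a by (simp add: A.m_assoc[symmetric] u_def)
qed

lemma one_eq: "\<one>\<^bsub>M\<^esub> = \<one>\<^bsub>A\<^esub>"
proof -
  have "\<one>\<^bsub>M\<^esub> \<otimes>\<^bsub>M\<^esub> \<one>\<^bsub>A\<^esub> = \<one>\<^bsub>M\<^esub>" using circ_one[of "\<one>\<^bsub>M\<^esub>"] carrM M.one_closed by metis
  moreover have "\<one>\<^bsub>M\<^esub> \<otimes>\<^bsub>M\<^esub> \<one>\<^bsub>A\<^esub> = \<one>\<^bsub>A\<^esub>" using carrM A.one_closed M.l_one by metis
  ultimately show ?thesis by simp
qed

lemma lam_closed [simp]: "a \<in> carrier A \<Longrightarrow> b \<in> carrier A \<Longrightarrow> blam A M a b \<in> carrier A"
  by (simp add: blam_def)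

lemma circ_lam: "a \<in> carrier A \<Longrightarrow> b \<in> carrier A \<Longrightarrow> a \<otimes>\<^bsub>M\<^esub> b = a \<otimes>\<^bsub>A\<^esub> blam A M a b"
  by (simp add: blam_def A.m_assoc[symmetric])

lemma lam_mult: "a \<in> carrier A \<Longrightarrow> b \<in> carrier A \<Longrightarrow> c \<in> carrier A \<Longrightarrow>
   blam A M a (b \<otimes>\<^bsub>A\<^esub> c) = blam A M a b \<otimes>\<^bsub>A\<^esub> blam A M a c"
  by (simp add: blam_def law A.m_assoc)

lemma lam_hom: "a \<in> carrier A \<Longrightarrow> blam A M a \<in> hom A A"
  by (auto intro!: homI simp: lam_mult)

lemma lam_one [simp]: "a \<in> carrier A \<Longrightarrow> blam A M a \<one>\<^bsub>A\<^esub> = \<one>\<^bsub>A\<^esub>"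
  using hom_one[OF lam_hom grpA grpA] by simp

lemma lam_inv: "a \<in> carrier A \<Longrightarrow> b \<in> carrier A \<Longrightarrow> blam A M a (inv\<^bsub>A\<^esub> b) = inv\<^bsub>A\<^esub> (blam A M a b)"
  using group_hom.hom_inv[of A A "blam A M a" b] lam_hom grpA
  by (simp add: group_hom_def group_hom_axioms_def)

lemma lam_comp:
  assumes a: "a \<in> carrier A" and b: "b \<in> carrier A" and c: "c \<in> carrier A"
  shows "blam A M (a \<otimes>\<^bsub>M\<^esub> b) c = blam A M a (blam A M b c)"
proof -
  have bc: "blam A M b c = inv\<^bsub>A\<^esub> b \<otimes>\<^bsub>A\<^esub> (b \<otimes>\<^bsub>M\<^esub> c)" by (simp add: blam_def)
  have aux: "\<And>x. x \<in> carrier A \<Longrightarrow> a \<otimes>\<^bsub>A\<^esub> (inv\<^bsub>A\<^esub> a \<otimes>\<^bsub>A\<^esub> x) = x"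
    using a by (simp add: A.m_assoc[symmetric])
  have "blam A M a (blam A M b c) = blam A M a (inv\<^bsub>A\<^esub> b) \<otimes>\<^bsub>A\<^esub> blam A M a (b \<otimes>\<^bsub>M\<^esub> c)"
    using a b c by (simp only: bc lam_mult A.inv_closed circ_closed)
  also have "\<dots> = inv\<^bsub>A\<^esub> (blam A M a b) \<otimes>\<^bsub>A\<^esub> blam A M a (b \<otimes>\<^bsub>M\<^esub> c)"
    using a b by (simp only: lam_inv)
  also have "\<dots> = inv\<^bsub>A\<^esub> (inv\<^bsub>A\<^esub> a \<otimes>\<^bsub>A\<^esub> (a \<otimes>\<^bsub>M\<^esub> b)) \<otimes>\<^bsub>A\<^esub> (inv\<^bsub>A\<^esub> a \<otimes>\<^bsub>A\<^esub> (a \<otimes>\<^bsub>M\<^esub> (b \<otimes>\<^bsub>M\<^esub> c)))"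
    by (simp only: blam_def)
  also have "\<dots> = inv\<^bsub>A\<^esub> (a \<otimes>\<^bsub>M\<^esub> b) \<otimes>\<^bsub>A\<^esub> (a \<otimes>\<^bsub>M\<^esub> (b \<otimes>\<^bsub>M\<^esub> c))"
    using a b c by (simp add: A.inv_mult_group A.m_assoc aux)
  also have "\<dots> = inv\<^bsub>A\<^esub> (a \<otimes>\<^bsub>M\<^esub> b) \<otimes>\<^bsub>A\<^esub> ((a \<otimes>\<^bsub>M\<^esub> b) \<otimes>\<^bsub>M\<^esub> c)"
    using a b c carrM by (simp add: M.m_assoc)
  finally show ?thesis by (simp add: blam_def)
qed

lemma lam_one_left: "c \<in> carrier A \<Longrightarrow> blam A M \<one>\<^bsub>A\<^esub> c = c"
proof -
  assume c: "c \<in> carrier A"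
  have "\<one>\<^bsub>A\<^esub> \<otimes>\<^bsub>M\<^esub> c = c" using c carrM one_eq M.l_one by metis
  then show ?thesis using c by (simp add: blam_def)
qed

lemma lam_inv_left:
  assumes x: "x \<in> carrier A" and c: "c \<in> carrier A"
  shows "blam A M x (blam A M (inv\<^bsub>M\<^esub> x) c) = c"
proof -
  have xi: "inv\<^bsub>M\<^esub> x \<in> carrier A" using x carrM by (metis M.inv_closed)
  have "x \<otimes>\<^bsub>M\<^esub> inv\<^bsub>M\<^esub> x = \<one>\<^bsub>A\<^esub>" using x carrM one_eq by (metis M.r_inv)
  then show ?thesis using lam_comp[OF x xi c] lam_one_left[OF c] by simp
qed


lemma lam_inv_right:
  assumes x: "x \<in> carrier A" and c: "c \<in> carrier A"
  shows "blam A M (inv\<^bsub>M\<^esub> x) (blam A M x c) = c"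
proof -
  have xi: "inv\<^bsub>M\<^esub> x \<in> carrier A" using x carrM by (metis M.inv_closed)
  have "inv\<^bsub>M\<^esub> x \<otimes>\<^bsub>M\<^esub> x = \<one>\<^bsub>A\<^esub>" using x carrM one_eq by (metis M.l_inv)
  then show ?thesis using lam_comp[OF xi x c] lam_one_left[OF c] by simp
qed

lemma minv_closed [simp]: "x \<in> carrier A \<Longrightarrow> inv\<^bsub>M\<^esub> x \<in> carrier A"
proof -
  assume "x \<in> carrier A" then have "x \<in> carrier M" by (simp add: carrM)
  then have "inv\<^bsub>M\<^esub> x \<in> carrier M" by (rule M.inv_closed)
  then show ?thesis by (simp add: carrM)
qed

lemma minv_l [simp]: "x \<in> carrier A \<Longrightarrow> inv\<^bsub>M\<^esub> x \<otimes>\<^bsub>M\<^esub> x = \<one>\<^bsub>A\<^esub>"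
proof -
  assume "x \<in> carrier A" then have "x \<in> carrier M" by (simp add: carrM)
  then show ?thesis by (simp add: one_eq[symmetric])
qed

lemma minv_r [simp]: "x \<in> carrier A \<Longrightarrow> x \<otimes>\<^bsub>M\<^esub> inv\<^bsub>M\<^esub> x = \<one>\<^bsub>A\<^esub>"
proof -
  assume "x \<in> carrier A" then have "x \<in> carrier M" by (simp add: carrM)
  then show ?thesis by (simp add: one_eq[symmetric])
qed

lemma circ_one_left [simp]: "x \<in> carrier A \<Longrightarrow> \<one>\<^bsub>A\<^esub> \<otimes>\<^bsub>M\<^esub> x = x"
proof -
  assume "x \<in> carrier A" then have "x \<in> carrier M" by (simp add: carrM)
  then show ?thesis by (simp add: one_eq[symmetric])
qed

lemma circ_assoc: "x \<in> carrier A \<Longrightarrow> y \<in> carrier A \<Longrightarrow> z \<in> carrier A \<Longrightarrow>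
  x \<otimes>\<^bsub>M\<^esub> y \<otimes>\<^bsub>M\<^esub> z = x \<otimes>\<^bsub>M\<^esub> (y \<otimes>\<^bsub>M\<^esub> z)"
  using M.m_assoc by (simp add: carrM)

lemma subgroup_M:
  assumes sub: "subgroup I A"
    and lam: "\<And>a h. a \<in> carrier A \<Longrightarrow> h \<in> I \<Longrightarrow> blam A M a h \<in> I"
  shows "subgroup I M"
proof
  have Ic: "\<And>h. h \<in> I \<Longrightarrow> h \<in> carrier A" using sub subgroup.subset by blast
  show "I \<subseteq> carrier M" using subgroup.subset[OF sub] by (simp add: carrM)
  have "\<one>\<^bsub>A\<^esub> \<in> I" by (rule subgroup.one_closed[OF sub])
  then show "\<one>\<^bsub>M\<^esub> \<in> I" by (simp add: one_eq)
  fix h k assume h: "h \<in> I" and k: "k \<in> I"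
  have hc: "h \<in> carrier A" and kc: "k \<in> carrier A" using h k Ic by auto
  have "h \<otimes>\<^bsub>A\<^esub> blam A M h k \<in> I" by (rule subgroup.m_closed[OF sub h lam[OF hc k]])
  then show "h \<otimes>\<^bsub>M\<^esub> k \<in> I" using hc kc by (simp add: circ_lam)
  define hb where "hb = inv\<^bsub>M\<^esub> h"
  have hbc: "hb \<in> carrier A" using hc hb_def by simp
  have "hb \<otimes>\<^bsub>M\<^esub> h = \<one>\<^bsub>A\<^esub>" using hc hb_def by simp
  then have e1: "hb \<otimes>\<^bsub>A\<^esub> blam A M hb h = \<one>\<^bsub>A\<^esub>" using hbc hc by (simp add: circ_lam)
  have "inv\<^bsub>A\<^esub> (blam A M hb h) = hb" by (rule A.inv_equality[OF e1]) (simp_all add: hbc hc)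
  then have "hb = blam A M hb (inv\<^bsub>A\<^esub> h)" using hbc hc by (simp add: lam_inv)
  moreover have "blam A M hb (inv\<^bsub>A\<^esub> h) \<in> I"
    by (rule lam[OF hbc subgroup.m_inv_closed[OF sub h]])
  ultimately show "inv\<^bsub>M\<^esub> h \<in> I" using hb_def by simp
qed

lemma A_cancel1: "a \<in> carrier A \<Longrightarrow> x \<in> carrier A \<Longrightarrow> a \<otimes>\<^bsub>A\<^esub> (inv\<^bsub>A\<^esub> a \<otimes>\<^bsub>A\<^esub> x) = x"
  by (simp add: A.m_assoc[symmetric])

lemma A_cancel2: "a \<in> carrier A \<Longrightarrow> x \<in> carrier A \<Longrightarrow> inv\<^bsub>A\<^esub> a \<otimes>\<^bsub>A\<^esub> (a \<otimes>\<^bsub>A\<^esub> x) = x"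
  by (simp add: A.m_assoc[symmetric])

lemma ideal_crit:
  assumes sub: "subgroup I A"
    and conj: "\<And>x h. x \<in> carrier A \<Longrightarrow> h \<in> I \<Longrightarrow> x \<otimes>\<^bsub>A\<^esub> h \<otimes>\<^bsub>A\<^esub> inv\<^bsub>A\<^esub> x \<in> I"
    and lam: "\<And>a h. a \<in> carrier A \<Longrightarrow> h \<in> I \<Longrightarrow> blam A M a h \<in> I"
    and star: "\<And>h b. h \<in> I \<Longrightarrow> b \<in> carrier A \<Longrightarrow> bstar A M h b \<in> I"
  shows "brace_ideal A M I"
proof -
  have Ic: "\<And>h. h \<in> I \<Longrightarrow> h \<in> carrier A" using subgroup.subset[OF sub] by blast
  have nA: "normal I A" using sub conj by (simp add: A.normal_inv_iff)
  have subM: "subgroup I M" by (rule subgroup_M[OF sub lam])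
  have cM: "x \<otimes>\<^bsub>M\<^esub> h \<otimes>\<^bsub>M\<^esub> inv\<^bsub>M\<^esub> x \<in> I" if x: "x \<in> carrier A" and h: "h \<in> I" for x h
  proof -
    define y where "y = inv\<^bsub>M\<^esub> x"
    have yc: "y \<in> carrier A" using x y_def by simp
    have hc: "h \<in> carrier A" using h Ic by blast
    define h' where "h' = h \<otimes>\<^bsub>A\<^esub> bstar A M h y"
    have h'I: "h' \<in> I" unfolding h'_def by (rule subgroup.m_closed[OF sub h star[OF h yc]])
    have h'c: "h' \<in> carrier A" using h'I Ic by blast
    have hy: "h \<otimes>\<^bsub>M\<^esub> y = h' \<otimes>\<^bsub>A\<^esub> y"
      using hc yc by (simp add: h'_def bstar_def A.m_assoc A_cancel1)
    define h'' where "h'' = inv\<^bsub>A\<^esub> y \<otimes>\<^bsub>A\<^esub> h' \<otimes>\<^bsub>A\<^esub> y"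
    have h''I: "h'' \<in> I"
    proof -
      have "inv\<^bsub>A\<^esub> y \<otimes>\<^bsub>A\<^esub> h' \<otimes>\<^bsub>A\<^esub> inv\<^bsub>A\<^esub> (inv\<^bsub>A\<^esub> y) \<in> I"
        by (rule conj[OF A.inv_closed[OF yc] h'I])
      then show ?thesis using yc by (simp add: h''_def)
    qed
    have h''c: "h'' \<in> carrier A" using h''I Ic by blast
    have yh: "h' \<otimes>\<^bsub>A\<^esub> y = y \<otimes>\<^bsub>A\<^esub> h''"
      using h'c yc by (simp add: h''_def A.m_assoc A_cancel1)
    define k where "k = blam A M x h''"
    have kI: "k \<in> I" unfolding k_def by (rule lam[OF x h''I])
    have kc: "k \<in> carrier A" using kI Ic by blast
    have "blam A M y k = h''" using lam_inv_right[OF x h''c] by (simp add: k_def y_def)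
    then have yk: "y \<otimes>\<^bsub>M\<^esub> k = y \<otimes>\<^bsub>A\<^esub> h''" using yc kc by (simp add: circ_lam)
    have "x \<otimes>\<^bsub>M\<^esub> h \<otimes>\<^bsub>M\<^esub> inv\<^bsub>M\<^esub> x = x \<otimes>\<^bsub>M\<^esub> (h \<otimes>\<^bsub>M\<^esub> y)"
      using x hc yc by (simp add: circ_assoc y_def)
    also have "\<dots> = x \<otimes>\<^bsub>M\<^esub> (y \<otimes>\<^bsub>M\<^esub> k)" using hy yh yk by simp
    also have "\<dots> = (x \<otimes>\<^bsub>M\<^esub> y) \<otimes>\<^bsub>M\<^esub> k" using x kc yc by (simp add: circ_assoc)
    also have "\<dots> = k" using x kc by (simp add: y_def)
    finally show ?thesis using kI by simp
  qed
  have nM: "normal I M" using subM cM by (simp add: M.normal_inv_iff carrM)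
  show ?thesis unfolding brace_ideal_def using nA nM lam by blast
qed


lemma star_closed [simp]: "a \<in> carrier A \<Longrightarrow> b \<in> carrier A \<Longrightarrow> bstar A M a b \<in> carrier A"
  by (simp add: bstar_def)

lemma lam_star: "a \<in> carrier A \<Longrightarrow> h \<in> carrier A \<Longrightarrow> blam A M a h = bstar A M a h \<otimes>\<^bsub>A\<^esub> h"
  by (simp add: blam_def bstar_def A.m_assoc)

lemma star_conj: "a \<in> carrier A \<Longrightarrow> x \<in> carrier A \<Longrightarrow> c \<in> carrier A \<Longrightarrow>
  x \<otimes>\<^bsub>A\<^esub> bstar A M a c \<otimes>\<^bsub>A\<^esub> inv\<^bsub>A\<^esub> x = inv\<^bsub>A\<^esub> (bstar A M a x) \<otimes>\<^bsub>A\<^esub> bstar A M a (x \<otimes>\<^bsub>A\<^esub> c)"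
  by (simp add: bstar_def law A.inv_mult_group A.m_assoc A_cancel1 A_cancel2)

lemma ideal_carrier: "brace_ideal A M (carrier A)"
  by (rule ideal_crit) (simp_all add: A.subgroup_self)

lemma ideal_Inter:
  assumes F: "F \<noteq> {}" and id: "\<And>I. I \<in> F \<Longrightarrow> brace_ideal A M I"
  shows "brace_ideal A M (\<Inter>F)"
proof -
  have subA: "subgroup (\<Inter>F) A"
    by (rule subgroup_Inter[OF _ F]) (use id in \<open>simp add: brace_ideal_def normal_def\<close>)
  have subM: "subgroup (\<Inter>F) M"
    by (rule subgroup_Inter[OF _ F]) (use id in \<open>simp add: brace_ideal_def normal_def\<close>)
  have nA: "normal (\<Inter>F) A"
  proof -
    have "x \<otimes>\<^bsub>A\<^esub> h \<otimes>\<^bsub>A\<^esub> inv\<^bsub>A\<^esub> x \<in> I" if "x \<in> carrier A" "h \<in> \<Inter>F" "I \<in> F" for x h I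
    proof -
      have "normal I A" using id[OF that(3)] by (simp add: brace_ideal_def)
      then show ?thesis using that by (simp add: A.normal_inv_iff)
    qed
    then show ?thesis using subA by (simp add: A.normal_inv_iff)
  qed
  have nM: "normal (\<Inter>F) M"
  proof -
    have "x \<otimes>\<^bsub>M\<^esub> h \<otimes>\<^bsub>M\<^esub> inv\<^bsub>M\<^esub> x \<in> I" if "x \<in> carrier M" "h \<in> \<Inter>F" "I \<in> F" for x h I
    proof -
      have "normal I M" using id[OF that(3)] by (simp add: brace_ideal_def)
      then show ?thesis using that by (simp add: M.normal_inv_iff)
    qed
    then show ?thesis using subM by (simp add: M.normal_inv_iff)
  qed
  have "blam A M a ` \<Inter>F \<subseteq> \<Inter>F" if "a \<in> carrier A" for a
  proof
    fix y assume "y \<in> blam A M a ` \<Inter>F"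
    then obtain h where h: "h \<in> \<Inter>F" "y = blam A M a h" by blast
    have "blam A M a h \<in> I" if "I \<in> F" for I
    proof -
      have "blam A M a ` I \<subseteq> I" using id[OF that] \<open>a \<in> carrier A\<close> by (simp add: brace_ideal_def)
      then show ?thesis using h that by blast
    qed
    then show "y \<in> \<Inter>F" using h by blast
  qed
  then show ?thesis using nA nM by (simp add: brace_ideal_def)
qed


lemma I2_ideal: "brace_ideal A M (brace_star_set A M (carrier A) (carrier A))"
proof -
  let ?T = "{bstar A M i j | i j. i \<in> carrier A \<and> j \<in> carrier A}"
  let ?I = "generate A ?T"
  have Tc: "?T \<subseteq> carrier A" by auto
  have Ic: "?I \<subseteq> carrier A" by (rule A.generate_incl[OF Tc])
  have sub: "subgroup ?I A" by (rule A.generate_is_subgroup[OF Tc])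
  have conj: "x \<otimes>\<^bsub>A\<^esub> h \<otimes>\<^bsub>A\<^esub> inv\<^bsub>A\<^esub> x \<in> ?I" if x: "x \<in> carrier A" and h: "h \<in> ?I" for x h
    using h
  proof (induction h rule: generate.induct)
    case one
    then show ?case using x by (simp add: generate.one)
  next
    case (incl h)
    then obtain a c where ac: "a \<in> carrier A" "c \<in> carrier A" "h = bstar A M a c" by blast
    have "inv\<^bsub>A\<^esub> (bstar A M a x) \<otimes>\<^bsub>A\<^esub> bstar A M a (x \<otimes>\<^bsub>A\<^esub> c) \<in> ?I"
      by (rule generate.eng[OF generate.inv generate.incl]) (use ac x in auto)
    then show ?case using star_conj[OF ac(1) x ac(2)] ac(3) by simp
  next
    case (inv h)
    then obtain a c where ac: "a \<in> carrier A" "c \<in> carrier A" "h = bstar A M a c" by blast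
    have "inv\<^bsub>A\<^esub> (bstar A M a (x \<otimes>\<^bsub>A\<^esub> c)) \<otimes>\<^bsub>A\<^esub> bstar A M a x \<in> ?I"
      by (rule generate.eng[OF generate.inv generate.incl]) (use ac x in auto)
    moreover have "x \<otimes>\<^bsub>A\<^esub> inv\<^bsub>A\<^esub> h \<otimes>\<^bsub>A\<^esub> inv\<^bsub>A\<^esub> x = inv\<^bsub>A\<^esub> (x \<otimes>\<^bsub>A\<^esub> h \<otimes>\<^bsub>A\<^esub> inv\<^bsub>A\<^esub> x)"
      using ac x by (simp add: A.inv_mult_group A.m_assoc)
    ultimately show ?case using star_conj[OF ac(1) x ac(2)] ac(3) x ac
      by (simp add: A.inv_mult_group)
  next
    case (eng h1 h2)
    have c: "h1 \<in> carrier A" "h2 \<in> carrier A" using eng.hyps Ic by auto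
    have "x \<otimes>\<^bsub>A\<^esub> (h1 \<otimes>\<^bsub>A\<^esub> h2) \<otimes>\<^bsub>A\<^esub> inv\<^bsub>A\<^esub> x
      = (x \<otimes>\<^bsub>A\<^esub> h1 \<otimes>\<^bsub>A\<^esub> inv\<^bsub>A\<^esub> x) \<otimes>\<^bsub>A\<^esub> (x \<otimes>\<^bsub>A\<^esub> h2 \<otimes>\<^bsub>A\<^esub> inv\<^bsub>A\<^esub> x)"
      using c x by (simp add: A.m_assoc A_cancel2)
    then show ?case using generate.eng[OF eng.IH] by simp
  qed
  have lam: "blam A M a h \<in> ?I" if a: "a \<in> carrier A" and h: "h \<in> ?I" for a h
  proof -
    have hc: "h \<in> carrier A" using h Ic by auto
    have "bstar A M a h \<otimes>\<^bsub>A\<^esub> h \<in> ?I"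
      by (rule generate.eng[OF generate.incl h]) (use a hc in auto)
    then show ?thesis using lam_star[OF a hc] by simp
  qed
  have star: "bstar A M h b \<in> ?I" if h: "h \<in> ?I" and b: "b \<in> carrier A" for h b
    by (rule generate.incl) (use h b Ic in auto)
  show ?thesis unfolding brace_star_set_def by (rule ideal_crit[OF sub conj lam star])
qed


lemma lam_inj: "a \<in> carrier A \<Longrightarrow> inj_on (blam A M a) (carrier A)"
  by (metis inj_onI lam_inv_right)

end

lemma iso_from_endo:
  assumes "f \<in> hom G G" "finite (carrier G)" "inj_on f (carrier G)"
  shows "f \<in> iso G G"
proof -
  have "f ` carrier G \<subseteq> carrier G" using assms(1) by (auto simp: hom_def)
  then have "f ` carrier G = carrier G" using endo_inj_surj assms by blast
  then show ?thesis using assms by (simp add: iso_iff)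
qed



theorem lemma5p3:
  fixes A M :: "'a monoid" and Y :: "'a set"
  defines "V \<equiv> brace_ideal_gen A M {z. \<exists>x\<in>Y. \<exists>y\<in>Y. z = x \<otimes>\<^bsub>A\<^esub> inv\<^bsub>A\<^esub> y}"
  assumes brace: "skew_left_brace A M"
    and fin: "finite (carrier A)"
    and XB: "Y \<subseteq> carrier A"
    and X3: "card Y \<ge> 3"
    and lamX: "\<forall>a\<in>carrier A. blam A M a ` Y = Y"
    and sigX: "\<forall>a\<in>carrier A. bsig A a ` Y = Y"
    and gen: "generate A Y = carrier A"
    and Vmin: "\<forall>I. brace_ideal A M I \<and> I \<noteq> {\<one>\<^bsub>A\<^esub>} \<longrightarrow> V \<subseteq> I"
    and Vquot: "brace_quotient_trivial A M V"
    and Vcyc: "cyclic_group (A Mod V)"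
    and trans: "\<forall>x\<in>Y. \<forall>y\<in>Y. \<exists>a\<in>V. \<exists>b\<in>V. bsig A a (blam A M b x) = y"
    and B3: "brace_star_set A M (brace_star_set A M (carrier A) (carrier A)) (carrier A) = {\<one>\<^bsub>A\<^esub>}"
  shows "char_simple (A\<lparr>carrier := V\<rparr>)
    \<and> (comm_group (A\<lparr>carrier := V\<rparr>) \<longrightarrow>
         (\<exists>p (n::nat). Factorial_Ring.prime (p::nat) \<and> A\<lparr>carrier := V\<rparr> \<cong> product_group {..<n} (\<lambda>_. integer_mod_group p)))
    \<and> (\<not> comm_group (A\<lparr>carrier := V\<rparr>) \<longrightarrow> group_center (A\<lparr>carrier := V\<rparr>) = {\<one>\<^bsub>A\<^esub>})"
proof -
  interpret sbrace A M by (rule sbrace.intro[OF brace])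
  let ?S = "{z. \<exists>x\<in>Y. \<exists>y\<in>Y. z = x \<otimes>\<^bsub>A\<^esub> inv\<^bsub>A\<^esub> y}"
  let ?F = "{I. brace_ideal A M I \<and> ?S \<subseteq> I}"
  have Sc: "?S \<subseteq> carrier A" using XB by auto
  have CF: "carrier A \<in> ?F" using ideal_carrier Sc by simp
  have Vdef: "V = \<Inter>?F" by (simp add: V_def brace_ideal_gen_def)
  have Vid: "brace_ideal A M V" unfolding Vdef by (rule ideal_Inter) (use CF in auto)
  have SV: "?S \<subseteq> V" unfolding Vdef by blast
  have VA: "V \<subseteq> carrier A" unfolding Vdef using CF by blast
  have Vsub: "subgroup V A" using Vid by (simp add: brace_ideal_def normal_def)
  have Vnorm: "normal V A" using Vid by (simp add: brace_ideal_def)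
  have Vconj: "x \<otimes>\<^bsub>A\<^esub> v \<otimes>\<^bsub>A\<^esub> inv\<^bsub>A\<^esub> x \<in> V" if "x \<in> carrier A" "v \<in> V" for x v
    using Vnorm that by (simp add: A.normal_inv_iff)
  have Vlam: "blam A M a v \<in> V" if "a \<in> carrier A" "v \<in> V" for a v
    using Vid that by (auto simp: brace_ideal_def)
  have Vne: "V \<noteq> {\<one>\<^bsub>A\<^esub>}"
  proof
    assume V1: "V = {\<one>\<^bsub>A\<^esub>}"
    have "\<exists>x\<in>Y. \<exists>y\<in>Y. x \<noteq> y"
    proof (rule ccontr)
      assume "\<not> ?thesis"
      then have "\<And>x y. x \<in> Y \<Longrightarrow> y \<in> Y \<Longrightarrow> x = y" by blast
      then have "card Y \<le> 1" by (simp add: card_le_Suc0_iff_eq finite_subset[OF XB fin])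
      then show False using X3 by simp
    qed
    then obtain x y where xy: "x \<in> Y" "y \<in> Y" "x \<noteq> y" by blast
    have xc: "x \<in> carrier A" and yc: "y \<in> carrier A" using xy XB by auto
    have "x \<otimes>\<^bsub>A\<^esub> inv\<^bsub>A\<^esub> y \<in> V" using SV xy by blast
    then have "x \<otimes>\<^bsub>A\<^esub> inv\<^bsub>A\<^esub> y = \<one>\<^bsub>A\<^esub>" using V1 by simp
    then have "inv\<^bsub>A\<^esub> (inv\<^bsub>A\<^esub> y) = x" by (rule A.inv_equality) (use xc yc in simp_all)
    then show False using xy yc by simp
  qed
  let ?I2 = "brace_star_set A M (carrier A) (carrier A)"
  have Vstar: "bstar A M v b = \<one>\<^bsub>A\<^esub>" if v: "v \<in> V" and b: "b \<in> carrier A" for v b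
  proof (cases "?I2 = {\<one>\<^bsub>A\<^esub>}")
    case True
    have "bstar A M v b \<in> ?I2" unfolding brace_star_set_def
      by (rule generate.incl) (use v b VA in auto)
    then show ?thesis using True by simp
  next
    case False
    then have "V \<subseteq> ?I2" using Vmin I2_ideal by blast
    then have "bstar A M v b \<in> brace_star_set A M ?I2 (carrier A)" unfolding brace_star_set_def[of A M ?I2]
      by (intro generate.incl) (use v b in blast)
    then show ?thesis using B3 by simp
  qed
  define G where "G = A\<lparr>carrier := V\<rparr>"
  have grpG: "group G" unfolding G_def by (rule A.subgroup_imp_group[OF Vsub])
  have finV: "finite (carrier G)" using finite_subset[OF VA fin] by (simp add: G_def)
  have cG: "carrier G = V" by (simp add: G_def)
  have oneG: "\<one>\<^bsub>G\<^esub> = \<one>\<^bsub>A\<^esub>" by (simp add: G_def)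
  have mulG: "\<And>x y. x \<otimes>\<^bsub>G\<^esub> y = x \<otimes>\<^bsub>A\<^esub> y" by (simp add: G_def)
  have sig_iso: "(\<lambda>v. x \<otimes>\<^bsub>A\<^esub> v \<otimes>\<^bsub>A\<^esub> inv\<^bsub>A\<^esub> x) \<in> iso G G" if x: "x \<in> carrier A" for x
  proof (rule iso_from_endo[OF _ finV])
    show "(\<lambda>v. x \<otimes>\<^bsub>A\<^esub> v \<otimes>\<^bsub>A\<^esub> inv\<^bsub>A\<^esub> x) \<in> hom G G"
    proof (rule homI)
      fix v assume "v \<in> carrier G" then show "x \<otimes>\<^bsub>A\<^esub> v \<otimes>\<^bsub>A\<^esub> inv\<^bsub>A\<^esub> x \<in> carrier G"
        using Vconj x cG by simp
    next
      fix v w assume "v \<in> carrier G" "w \<in> carrier G"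
      then have c: "v \<in> carrier A" "w \<in> carrier A" using VA cG by auto
      show "x \<otimes>\<^bsub>A\<^esub> (v \<otimes>\<^bsub>G\<^esub> w) \<otimes>\<^bsub>A\<^esub> inv\<^bsub>A\<^esub> x =
        (x \<otimes>\<^bsub>A\<^esub> v \<otimes>\<^bsub>A\<^esub> inv\<^bsub>A\<^esub> x) \<otimes>\<^bsub>G\<^esub> (x \<otimes>\<^bsub>A\<^esub> w \<otimes>\<^bsub>A\<^esub> inv\<^bsub>A\<^esub> x)"
        using c x by (simp add: mulG A.m_assoc A_cancel2)
    qed
    show "inj_on (\<lambda>v. x \<otimes>\<^bsub>A\<^esub> v \<otimes>\<^bsub>A\<^esub> inv\<^bsub>A\<^esub> x) (carrier G)"
    proof (rule inj_onI)
      fix v w assume "v \<in> carrier G" "w \<in> carrier G"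
        and eq: "x \<otimes>\<^bsub>A\<^esub> v \<otimes>\<^bsub>A\<^esub> inv\<^bsub>A\<^esub> x = x \<otimes>\<^bsub>A\<^esub> w \<otimes>\<^bsub>A\<^esub> inv\<^bsub>A\<^esub> x"
      have c: "v \<in> carrier A" "w \<in> carrier A" using \<open>v \<in> carrier G\<close> \<open>w \<in> carrier G\<close> VA cG by auto
      from eq have "(x \<otimes>\<^bsub>A\<^esub> v \<otimes>\<^bsub>A\<^esub> inv\<^bsub>A\<^esub> x) \<otimes>\<^bsub>A\<^esub> x = (x \<otimes>\<^bsub>A\<^esub> w \<otimes>\<^bsub>A\<^esub> inv\<^bsub>A\<^esub> x) \<otimes>\<^bsub>A\<^esub> x"
        by (rule arg_cong)
      then have "x \<otimes>\<^bsub>A\<^esub> v = x \<otimes>\<^bsub>A\<^esub> w" using c x by (simp add: A.m_assoc)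
      then have "inv\<^bsub>A\<^esub> x \<otimes>\<^bsub>A\<^esub> (x \<otimes>\<^bsub>A\<^esub> v) = inv\<^bsub>A\<^esub> x \<otimes>\<^bsub>A\<^esub> (x \<otimes>\<^bsub>A\<^esub> w)" by simp
      then show "v = w" using c x by (simp add: A_cancel2)
    qed
  qed
  have lam_iso: "blam A M a \<in> iso G G" if a: "a \<in> carrier A" for a
  proof (rule iso_from_endo[OF _ finV])
    show "blam A M a \<in> hom G G"
    proof (rule homI)
      fix v assume "v \<in> carrier G" then show "blam A M a v \<in> carrier G"
        using Vlam a cG by simp
    next
      fix v w assume "v \<in> carrier G" "w \<in> carrier G"
      then have c: "v \<in> carrier A" "w \<in> carrier A" using VA cG by auto
      show "blam A M a (v \<otimes>\<^bsub>G\<^esub> w) = blam A M a v \<otimes>\<^bsub>G\<^esub> blam A M a w"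
        using c a by (simp add: mulG lam_mult)
    qed
    show "inj_on (blam A M a) (carrier G)"
      using lam_inj[OF a] VA cG by (auto intro: inj_on_subset)
  qed
  have cs: "char_simple G"
    unfolding char_simple_def
  proof (intro conjI allI impI)
    show "carrier G \<noteq> {\<one>\<^bsub>G\<^esub>}" using Vne cG oneG by simp
    fix H assume H: "subgroup H G \<and> (\<forall>\<phi>\<in>iso G G. \<phi> ` H = H)"
    show "H = {\<one>\<^bsub>G\<^esub>} \<or> H = carrier G"
    proof (cases "H = {\<one>\<^bsub>G\<^esub>}")
      case True then show ?thesis by simp
    next
      case False
      have HG: "subgroup H (A\<lparr>carrier := V\<rparr>)" using H by (simp add: G_def)
      have HA: "subgroup H A" by (rule A.incl_subgroup[OF Vsub HG])
      have HV: "H \<subseteq> V" using subgroup.subset[OF HG] by simp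
      have char: "\<And>\<phi>. \<phi> \<in> iso G G \<Longrightarrow> \<phi> ` H = H" using H by blast
      have "brace_ideal A M H"
      proof (rule ideal_crit[OF HA])
        fix x h assume x: "x \<in> carrier A" and h: "h \<in> H"
        have "x \<otimes>\<^bsub>A\<^esub> h \<otimes>\<^bsub>A\<^esub> inv\<^bsub>A\<^esub> x \<in> (\<lambda>v. x \<otimes>\<^bsub>A\<^esub> v \<otimes>\<^bsub>A\<^esub> inv\<^bsub>A\<^esub> x) ` H"
          using h by blast
        then show "x \<otimes>\<^bsub>A\<^esub> h \<otimes>\<^bsub>A\<^esub> inv\<^bsub>A\<^esub> x \<in> H" using char[OF sig_iso[OF x]] by simp
      next
        fix a h assume a: "a \<in> carrier A" and h: "h \<in> H"
        have "blam A M a h \<in> blam A M a ` H" using h by blast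
        then show "blam A M a h \<in> H" using char[OF lam_iso[OF a]] by simp
      next
        fix h b assume h: "h \<in> H" and b: "b \<in> carrier A"
        have "bstar A M h b = \<one>\<^bsub>A\<^esub>" using Vstar h HV b by blast
        then show "bstar A M h b \<in> H" using subgroup.one_closed[OF HA] by simp
      qed
      moreover have "H \<noteq> {\<one>\<^bsub>A\<^esub>}" using False oneG by simp
      ultimately have "V \<subseteq> H" using Vmin by blast
      then show ?thesis using HV cG by auto
    qed
  qed
  have ab: "\<exists>p (n::nat). Factorial_Ring.prime (p::nat) \<and> G \<cong> product_group {..<n} (\<lambda>_. integer_mod_group p)"
    if "comm_group G" using comm_group.cs_abelian[OF that finV cs] .
  have nab: "group_center G = {\<one>\<^bsub>A\<^esub>}" if "\<not> comm_group G"
    using group.cs_center[OF grpG cs that] oneG by simp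
  show ?thesis using cs ab nab unfolding G_def by blast
qed

end
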